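(* Let $d\in R$ be nonzero, let $k$ be a positive integer, and let $a_0,a_1,\ldots,a_k$ be a $d$-sequence of length $k$ for $S$. Let $f'\in\mathbb{K}[x]$ be a polynomial of degree $k'\le k$ that can be written as $f'=\tfrac{g'}{d'}$ with $g'\in R[x]$ and $d'\in R$ a nonzero divisor of $d$. Then $$f'\in\mathrm{Int}(S,R)\iff f'(a_i)\in R\ \text{ for all } 0\le i\le k'.$$
   Context: Let $R$ be a unique factorization domain with field of fractions $\mathbb{K}$, and let $S\subseteq R$ be a nonempty subset. Define $\mathrm{Int}(S,R)=\{f\in\mathbb{K}[x]: f(a)\in R \text{ for all } a\in S\}$. For an irreducible $\pi\in R$, $R_{(\pi)}$ denotes the localization of $R$ at the prime ideal $(\pi)$, $\mathrm{Int}(S,R_{(\pi)})=\{f\in\mathbb{K}[x]: f(a)\in R_{(\pi)} \text{ for all } a\in S\}$, and $v_\pi$ denotes the $\pi$-adic valuation. $\pi$-sequence: for an irreducible $\pi\in R$ and a positive integer $k$, a $\pi$-sequence of length $k$ in $S$ is a sequence $u_0,u_1,\ldots,u_k$ of distinct elements of $S$ such that for every $1\le m\le k$, $$\frac{(x-u_0)(x-u_1)\cdots(x-u_{m-1})}{(u_m-u_0)(u_m-u_1)\cdots(u_m-u_{m-1})}\in\mathrm{Int}(S,R_{(\pi)}).$$ $d$-sequence: let $d\in R$ be nonzero and $k$ a positive integer. Let $\pi_1,\ldots,\pi_r$ be a complete list of pairwise non-associate irreducible elements of $R$ dividing $d$. For each $1\le j\le r$ choose a $\pi_j$-sequence $u_{0j},u_{1j},\ldots,u_{kj}$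 of length $k$ in $S$, and let $e_j=v_{\pi_j}\big((u_{kj}-u_{0j})(u_{kj}-u_{1j})\cdots(u_{kj}-u_{k-1,j})\big)$. A $d$-sequence of length $k$ (for $S$) is any sequence $a_0,a_1,\ldots,a_k$ of elements of $R$ satisfying $$a_i\equiv u_{ij}\pmod{\pi_j^{e_j+1}}\quad\text{for all } 0\le i\le k,\ 1\le j\le r.$$ (Such sequences exist by the Chinese remainder theorem; they depend on the choices made, and the $a_i$ need not lie in $S$.) *)

theory Defs
  imports "HOL-Computational_Algebra.Computational_Algebra"
begin

text \<open>R is a UFD (type class {factorial_semiring,idom}), K = 'a fract, the embedding R -> K is to_fract.\<close>

definition IntSR :: "'a::{factorial_semiring,idom} set \<Rightarrow> 'a fract poly set" where
  "IntSR S = {f. \<forall>a\<in>S. poly f (to_fract a) \<in> range to_fract}"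

definition loc_at :: "'a::{factorial_semiring,idom} \<Rightarrow> 'a fract set" where
  "loc_at p = {x. \<exists>a b. b \<noteq> 0 \<and> \<not> p dvd b \<and> x = Fract a b}"

definition IntSloc :: "'a::{factorial_semiring,idom} set \<Rightarrow> 'a \<Rightarrow> 'a fract poly set" where
  "IntSloc S p = {f. \<forall>a\<in>S. poly f (to_fract a) \<in> loc_at p}"

definition pi_seq :: "'a::{factorial_semiring,idom} \<Rightarrow> 'a set \<Rightarrow> nat \<Rightarrow> (nat \<Rightarrow> 'a) \<Rightarrow> bool" where
  "pi_seq p S k u \<longleftrightarrow>
     (\<forall>i\<le>k. u i \<in> S) \<and> inj_on u {0..k} \<and>
     (\<forall>m\<in>{1..k}.
        smult (inverse (\<Prod>i<m. to_fract (u m - u i))) (\<Prod>i<m. [:- to_fract (u i), 1:])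
          \<in> IntSloc S p)"

definition d_seq :: "'a::{factorial_semiring,idom} \<Rightarrow> 'a set \<Rightarrow> nat \<Rightarrow> (nat \<Rightarrow> 'a) \<Rightarrow> bool" where
  "d_seq d S k a \<longleftrightarrow>
     (\<exists>P :: 'a set. \<exists>u :: 'a \<Rightarrow> nat \<Rightarrow> 'a.
        finite P \<and>
        (\<forall>p\<in>P. irreducible p \<and> p dvd d) \<and>
        (\<forall>p\<in>P. \<forall>q\<in>P. p \<noteq> q \<longrightarrow> \<not> (p dvd q \<and> q dvd p)) \<and>
        (\<forall>q. irreducible q \<and> q dvd d \<longrightarrow> (\<exists>p\<in>P. p dvd q \<and> q dvd p)) \<and>
        (\<forall>p\<in>P. pi_seq p S k (u p) \<and>
           (\<forall>i\<le>k. p ^ (multiplicity p (\<Prod>i<k. u p k - u p i) + 1) dvd (a i - u p i))))"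

end

theory Submission
  imports Defs
begin


lemma loc_Fract:
  fixes p a b :: "'a::{factorial_semiring,idom}"
  assumes "prime_elem p" "b \<noteq> 0" "a \<noteq> 0" "multiplicity p b \<le> multiplicity p a"
  shows "Fract a b \<in> loc_at p"
proof -
  have nu: "\<not> is_unit p" using assms(1) by (simp add: prime_elem_def)
  obtain b' where b: "b = p ^ multiplicity p b * b'" "\<not> p dvd b'"
    using multiplicity_decompose'[OF assms(2) nu] by blast
  obtain a' where a: "a = p ^ multiplicity p a * a'" "\<not> p dvd a'"
    using multiplicity_decompose'[OF assms(3) nu] by blast
  define ma mb where "ma = multiplicity p a" and "mb = multiplicity p b"
  have pw: "p ^ ma = p ^ (ma - mb) * p ^ mb" using assms(4)
    by (simp add: ma_def mb_def flip: power_add)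
  have b'0: "b' \<noteq> 0" using b assms(2) by auto
  have a2: "a = p ^ (ma - mb) * p ^ mb * a'" using a(1) pw unfolding ma_def by simp
  have b2: "b = p ^ mb * b'" using b(1) unfolding mb_def .
  have "a * b' = (p ^ (ma - mb) * a') * b"
    by (subst a2, subst b2) (simp add: ac_simps)
  hence "Fract a b = Fract (p ^ (ma - mb) * a') b'"
    using assms(2) b'0 by (subst eq_fract(1)) auto
  thus ?thesis unfolding loc_at_def using b'0 b(2) by blast
qed

lemma loc_Fract_mult:
  fixes p a b :: "'a::{factorial_semiring,idom}"
  assumes "prime_elem p" "b \<noteq> 0" "a \<noteq> 0" "Fract a b \<in> loc_at p"
  shows "multiplicity p b \<le> multiplicity p a"
proof -
  obtain a' b' where ab: "b' \<noteq> 0" "\<not> p dvd b'" "Fract a b = Fract a' b'"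
    using assms(4) unfolding loc_at_def by blast
  have eq: "a * b' = a' * b" using ab assms(2) eq_fract(1) by metis
  hence "a' \<noteq> 0" using assms ab by auto
  have "multiplicity p (a * b') = multiplicity p (a' * b)" using eq by simp
  hence "multiplicity p a + multiplicity p b' = multiplicity p a' + multiplicity p b"
    using assms ab \<open>a' \<noteq> 0\<close> by (simp add: prime_elem_multiplicity_mult_distrib)
  moreover have "multiplicity p b' = 0" using ab(2) by (rule not_dvd_imp_multiplicity_0)
  ultimately show ?thesis by linarith
qed


lemma loc_to_fract:
  fixes p :: "'a::{factorial_semiring,idom}"
  assumes "prime_elem p" shows "to_fract x \<in> loc_at p"
  unfolding loc_at_def to_fract_def mem_Collect_eq using assms
  by (intro exI[where x=x] exI[where x=1]) (auto simp: prime_elem_def)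

lemma loc_0:
  fixes p :: "'a::{factorial_semiring,idom}"
  assumes "prime_elem p" shows "0 \<in> loc_at p"
  using loc_to_fract[OF assms, of 0] by simp

lemma loc_add:
  fixes p :: "'a::{factorial_semiring,idom}"
  assumes "prime_elem p" "x \<in> loc_at p" "y \<in> loc_at p" shows "x + y \<in> loc_at p"
proof -
  obtain a b c d where "b \<noteq> 0" "\<not> p dvd b" "x = Fract a b" "d \<noteq> 0" "\<not> p dvd d" "y = Fract c d"
    using assms unfolding loc_at_def by blast
  thus ?thesis unfolding loc_at_def mem_Collect_eq using assms(1)
    by (intro exI[where x="a * d + c * b"] exI[where x="b * d"]) (auto dest: prime_elem_dvd_multD)
qed

lemma loc_mult:
  fixes p :: "'a::{factorial_semiring,idom}"
  assumes "prime_elem p" "x \<in> loc_at p" "y \<in> loc_at p" shows "x * y \<in> loc_at p"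
proof -
  obtain a b c d where "b \<noteq> 0" "\<not> p dvd b" "x = Fract a b" "d \<noteq> 0" "\<not> p dvd d" "y = Fract c d"
    using assms unfolding loc_at_def by blast
  thus ?thesis unfolding loc_at_def mem_Collect_eq using assms(1)
    by (intro exI[where x="a * c"] exI[where x="b * d"]) (auto dest: prime_elem_dvd_multD)
qed

lemma loc_uminus:
  fixes p :: "'a::{factorial_semiring,idom}"
  assumes "x \<in> loc_at p" shows "- x \<in> loc_at p"
proof -
  obtain a b where "b \<noteq> 0" "\<not> p dvd b" "x = Fract a b"
    using assms unfolding loc_at_def by blast
  thus ?thesis unfolding loc_at_def mem_Collect_eq
    by (intro exI[where x="- a"] exI[where x="b"]) auto
qed

lemma loc_diff:
  fixes p :: "'a::{factorial_semiring,idom}"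
  assumes "prime_elem p" "x \<in> loc_at p" "y \<in> loc_at p" shows "x - y \<in> loc_at p"
  using loc_add[OF assms(1,2) loc_uminus[OF assms(3)]] by simp

lemma loc_global:
  fixes x :: "'a::{factorial_semiring,idom} fract"
  assumes "\<And>q. irreducible q \<Longrightarrow> x \<in> loc_at q"
  shows "x \<in> range to_fract"
proof -
  obtain a b where x: "x = Fract a b" "b \<noteq> 0" by (cases x)
  show ?thesis
  proof (cases "a = 0")
    case True hence "x = to_fract 0" using x by (simp add: to_fract_def eq_fract)
    thus ?thesis by blast
  next
    case False
    have "b dvd a"
    proof (rule multiplicity_le_imp_dvd[OF x(2)])
      fix q :: 'a assume "prime q"
      hence "irreducible q" "prime_elem q" by (auto simp: prime_elem_iff_irreducible)
      thus "multiplicity q b \<le> multiplicity q a"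
        using loc_Fract_mult[of q b a] assms x False by auto
    qed
    then obtain c where "a = b * c" by blast
    hence "x = to_fract c" using x by (simp add: to_fract_def eq_fract)
    thus ?thesis by blast
  qed
qed

lemma poly_fract_poly: "poly (map_poly to_fract g) (to_fract y) = to_fract (poly g y)"
  by (induction g) (auto simp: map_poly_pCons)



lemma newton_N:
  fixes f :: "'k::field poly"
  shows "degree f \<le> n \<Longrightarrow> \<exists>c. f = (\<Sum>m\<le>n. smult (c m) (\<Prod>i<m. [:- x i, 1:]))"
proof (induction n arbitrary: f x)
  case 0
  hence "f = [:coeff f 0:]" by (metis degree_0_id le_zero_eq)
  thus ?case by (intro exI[where x="\<lambda>_. coeff f 0"]) simp
next
  case (Suc n)
  define q where "q = synthetic_div f (x 0)"
  have f: "f = [:-x 0, 1:] * q + [:poly f (x 0):]"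
    unfolding q_def using synthetic_div_correct'[of "x 0" f] by simp
  have "degree q \<le> n" using Suc.prems unfolding q_def by (simp add: degree_synthetic_div)
  from Suc.IH[OF this, of "\<lambda>i. x (Suc i)"] obtain c where
    c: "q = (\<Sum>m\<le>n. smult (c m) (\<Prod>i<m. [:- x (Suc i), 1:]))" by blast
  define c' where "c' m = (case m of 0 \<Rightarrow> poly f (x 0) | Suc m' \<Rightarrow> c m')" for m
  have "(\<Sum>m\<le>Suc n. smult (c' m) (\<Prod>i<m. [:- x i, 1:]))
     = [:poly f (x 0):] + (\<Sum>m\<le>n. smult (c m) (\<Prod>i<Suc m. [:- x i, 1:]))"
    by (subst sum.atMost_Suc_shift) (simp add: c'_def)
  also have "(\<Sum>m\<le>n. smult (c m) (\<Prod>i<Suc m. [:- x i, 1:])) = [:-x 0, 1:] * q"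
    unfolding c by (simp only: prod.lessThan_Suc_shift sum_distrib_left mult_smult_right)
  finally show ?case using f by (intro exI[where x=c']) (simp add: add.commute)
qed

lemma sum_closed:
  assumes "0 \<in> L" "\<And>a b. a \<in> L \<Longrightarrow> b \<in> L \<Longrightarrow> a + b \<in> L" "\<And>i. i \<in> A \<Longrightarrow> g i \<in> L"
  shows "sum g A \<in> L"
  using assms(3)
proof (induction A rule: infinite_finite_induct)
  case (insert a A) thus ?case using assms(2) by auto
qed (use assms(1) in auto)

definition Qb :: "(nat \<Rightarrow> 'k::field) \<Rightarrow> nat \<Rightarrow> 'k poly" where
  "Qb x m = smult (inverse (\<Prod>i<m. x m - x i)) (\<Prod>i<m. [:- x i, 1:])"

lemma poly_Qb: "poly (Qb x m) z = inverse (\<Prod>i<m. x m - x i) * (\<Prod>i<m. z - x i)"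
  by (simp add: Qb_def poly_prod)

lemma newton_good:
  fixes f :: "'k::field poly" and L :: "'k set"
  assumes L0: "0 \<in> L" and Ladd: "\<And>a b. a \<in> L \<Longrightarrow> b \<in> L \<Longrightarrow> a + b \<in> L"
    and Ldiff: "\<And>a b. a \<in> L \<Longrightarrow> b \<in> L \<Longrightarrow> a - b \<in> L"
    and Lmult: "\<And>a b. a \<in> L \<Longrightarrow> b \<in> L \<Longrightarrow> a * b \<in> L"
    and inj: "inj_on x {..n}" and deg: "degree f \<le> n"
    and fx: "\<And>j. j \<le> n \<Longrightarrow> poly f (x j) \<in> L"
    and Qx: "\<And>j m. j \<le> n \<Longrightarrow> m < j \<Longrightarrow> poly (Qb x m) (x j) \<in> L"
    and Qy: "\<And>m. m \<le> n \<Longrightarrow> poly (Qb x m) y \<in> L"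
  shows "poly f y \<in> L"
proof -
  obtain c where c: "f = (\<Sum>m\<le>n. smult (c m) (\<Prod>i<m. [:- x i, 1:]))"
    using newton_N[OF deg] by blast
  define c' where "c' m = c m * (\<Prod>i<m. x m - x i)" for m
  have nz: "(\<Prod>i<m. x m - x i) \<noteq> 0" if "m \<le> n" for m
  proof
    assume "(\<Prod>i<m. x m - x i) = 0"
    then obtain i where "i < m" "x m = x i" by auto
    with inj that show False unfolding inj_on_def by (metis atMost_iff less_imp_le less_irrefl order.trans)
  qed
  have f: "f = (\<Sum>m\<le>n. smult (c' m) (Qb x m))"
    unfolding c
  proof (intro sum.cong refl)
    fix m assume "m \<in> {..n}"
    hence "(\<Prod>i<m. x m - x i) * inverse (\<Prod>i<m. x m - x i) = 1" using nz by simp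
    thus "smult (c m) (\<Prod>i<m. [:- x i, 1:]) = smult (c' m) (Qb x m)"
      by (simp add: c'_def Qb_def mult.assoc)
  qed
  have pf: "poly f z = (\<Sum>m\<le>n. c' m * poly (Qb x m) z)" for z
    by (subst f) (simp add: poly_sum)
  have Q0: "poly (Qb x m) (x j) = 0" if "j < m" for j m
    using that by (auto simp: poly_Qb)
  have Q1: "poly (Qb x m) (x m) = 1" if "m \<le> n" for m
    using nz[OF that] by (simp add: poly_Qb)
  have cL: "c' j \<in> L" if "j \<le> n" for j
    using that
  proof (induction j rule: less_induct)
    case (less j)
    have "{..n} = {..<j} \<union> {j} \<union> {j<..n}" using less.prems by auto
    hence "poly f (x j) = (\<Sum>m<j. c' m * poly (Qb x m) (x j)) + c' j * poly (Qb x j) (x j)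
            + (\<Sum>m\<in>{j<..n}. c' m * poly (Qb x m) (x j))"
      unfolding pf by (simp add: sum.union_disjoint) (subst sum.union_disjoint; auto)
    also have "(\<Sum>m\<in>{j<..n}. c' m * poly (Qb x m) (x j)) = 0"
      by (intro sum.neutral) (auto simp: Q0)
    finally have "c' j = poly f (x j) - (\<Sum>m<j. c' m * poly (Qb x m) (x j))"
      using Q1[OF less.prems] by simp
    also have "\<dots> \<in> L"
      using less.prems by (intro Ldiff fx sum_closed[OF L0 Ladd] Lmult less.IH Qx) auto
    finally show ?case .
  qed
  show ?thesis unfolding pf
    by (intro sum_closed[OF L0 Ladd] Lmult cL Qy) auto
qed



lemma to_fract_prod: "to_fract (prod f A) = prod (\<lambda>x. to_fract (f x)) A"
  by (induction A rule: infinite_finite_induct) simp_all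

lemma min_sum_le: "min (sum f A) (c::nat) \<le> sum (\<lambda>i. min (f i) c) A"
proof (induction A rule: infinite_finite_induct)
  case (insert a A) thus ?case by (simp add: min_def split: if_splits)
qed auto

lemma mult_E1:
  fixes p x y :: "'a::{factorial_semiring,idom}"
  assumes "p ^ c dvd y - x" "y \<noteq> 0" "prime_elem p"
  shows "min (multiplicity p x) c \<le> multiplicity p y"
proof -
  have "p ^ min (multiplicity p x) c dvd x"
    by (rule dvd_trans[OF le_imp_power_dvd multiplicity_dvd]) simp
  moreover have "p ^ min (multiplicity p x) c dvd y - x"
    by (rule dvd_trans[OF le_imp_power_dvd assms(1)]) simp
  ultimately have "p ^ min (multiplicity p x) c dvd x + (y - x)"
    by (rule dvd_add)
  hence "p ^ min (multiplicity p x) c dvd y" by simp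
  thus ?thesis using assms(2,3) by (simp add: power_dvd_iff_le_multiplicity prime_elem_def)
qed

lemma mult_E2:
  fixes p x y :: "'a::{factorial_semiring,idom}"
  assumes "p ^ (e + 1) dvd y - x" "multiplicity p x \<le> e" "x \<noteq> 0" "prime_elem p"
  shows "y \<noteq> 0 \<and> multiplicity p y = multiplicity p x"
proof -
  have nu: "\<not> is_unit p" using assms(4) by (simp add: prime_elem_def)
  have "y \<noteq> 0"
  proof
    assume "y = 0"
    hence "p ^ (e + 1) dvd x" using assms(1) by simp
    hence "e + 1 \<le> multiplicity p x" by (simp only: power_dvd_iff_le_multiplicity[OF assms(3) nu])
    thus False using assms(2) by simp
  qed
  have "multiplicity p x \<le> multiplicity p y" using mult_E1[OF assms(1) \<open>y \<noteq> 0\<close> assms(4)] assms(2) by simp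
  moreover have "\<not> Suc (multiplicity p x) \<le> multiplicity p y"
  proof
    assume "Suc (multiplicity p x) \<le> multiplicity p y"
    hence "p ^ Suc (multiplicity p x) dvd y" by (rule multiplicity_dvd')
    moreover have "p ^ Suc (multiplicity p x) dvd y - x"
      by (rule dvd_trans[OF le_imp_power_dvd assms(1)]) (use assms(2) in simp)
    ultimately have "p ^ Suc (multiplicity p x) dvd y - (y - x)" by (rule dvd_diff)
    hence "p ^ Suc (multiplicity p x) dvd x" by simp
    hence "Suc (multiplicity p x) \<le> multiplicity p x" by (simp only: power_dvd_iff_le_multiplicity[OF assms(3) nu])
    thus False by simp
  qed
  ultimately show ?thesis using \<open>y \<noteq> 0\<close> by simp
qed

context
  fixes p :: "'a::{factorial_semiring,idom}" and S k u
  assumes pe: "prime_elem p" and ps: "pi_seq p S k u"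
begin

definition "ee = multiplicity p (\<Prod>i<k. u k - u i)"
definition "ww m = multiplicity p (\<Prod>i<m. u m - u i)"

lemma u_S: "i \<le> k \<Longrightarrow> u i \<in> S" using ps unfolding pi_seq_def by auto

lemma u_ne: "i < j \<Longrightarrow> j \<le> k \<Longrightarrow> u j - u i \<noteq> 0"
proof
  assume ij: "i < j" "j \<le> k" and "u j - u i = 0"
  have inj: "inj_on u {0..k}" using ps unfolding pi_seq_def by blast
  from \<open>u j - u i = 0\<close> have "u j = u i" by simp
  from inj_onD[OF inj this] ij show False by auto
qed

lemma ww_sum: "m \<le> k \<Longrightarrow> ww m = (\<Sum>i<m. multiplicity p (u m - u i))"
proof -
  assume m: "m \<le> k"
  have "0 \<notin> (\<lambda>i. u m - u i) ` {..<m}" using u_ne m by force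
  thus ?thesis unfolding ww_def by (rule prime_elem_multiplicity_prod_distrib[OF pe]) simp
qed

lemma ee_ww: "ee = ww k" unfolding ee_def ww_def ..

lemma S1:
  assumes "s \<in> S" "1 \<le> m" "m \<le> k" "\<And>i. i < m \<Longrightarrow> s \<noteq> u i"
  shows "ww m \<le> (\<Sum>i<m. multiplicity p (s - u i))"
proof -
  have "smult (inverse (\<Prod>i<m. to_fract (u m - u i))) (\<Prod>i<m. [:- to_fract (u i), 1:]) \<in> IntSloc S p"
    using ps assms unfolding pi_seq_def by auto
  hence "poly (smult (inverse (\<Prod>i<m. to_fract (u m - u i))) (\<Prod>i<m. [:- to_fract (u i), 1:])) (to_fract s) \<in> loc_at p"
    using assms(1) unfolding IntSloc_def by auto
  also have "poly (smult (inverse (\<Prod>i<m. to_fract (u m - u i))) (\<Prod>i<m. [:- to_fract (u i), 1:])) (to_fract s)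
     = Fract (\<Prod>i<m. s - u i) (\<Prod>i<m. u m - u i)"
    by (simp add: poly_prod Fract_conv_to_fract to_fract_prod divide_inverse mult.commute)
  finally have "multiplicity p (\<Prod>i<m. u m - u i) \<le> multiplicity p (\<Prod>i<m. s - u i)"
    using assms u_ne by (intro loc_Fract_mult[OF pe]) auto
  thus ?thesis unfolding ww_def using assms(4)
    by (subst (asm) prime_elem_multiplicity_prod_distrib[OF pe]) auto
qed

lemma F1: "m \<le> k \<Longrightarrow> ww m \<le> ee"
proof -
  assume m: "m \<le> k"
  show ?thesis
  proof (cases "m = 0 \<or> m = k")
    case True thus ?thesis using ee_ww by (auto simp: ww_def)
  next
    case False
    hence "ww m \<le> (\<Sum>i<m. multiplicity p (u k - u i))"
    proof (intro S1)
      show "u k \<in> S" by (rule u_S) simp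
      show "1 \<le> m" using False by simp
      show "m \<le> k" by (rule m)
      fix i assume "i < m"
      hence "u k - u i \<noteq> 0" using u_ne[of i k] m False by simp
      thus "u k \<noteq> u i" by simp
    qed
    also have "\<dots> \<le> (\<Sum>i<k. multiplicity p (u k - u i))" using m by (intro sum_mono2) auto
    also have "\<dots> = ee" using ww_sum[of k] ee_ww by simp
    finally show ?thesis .
  qed
qed

lemma F2: "i < j \<Longrightarrow> j \<le> k \<Longrightarrow> multiplicity p (u j - u i) \<le> ee"
proof -
  assume ij: "i < j" "j \<le> k"
  have "multiplicity p (u j - u i) \<le> (\<Sum>i<j. multiplicity p (u j - u i))"
    using ij by (intro member_le_sum) auto
  also have "\<dots> = ww j" using ww_sum ij by simp
  also have "\<dots> \<le> ee" using F1 ij by simp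
  finally show ?thesis .
qed

lemma W:
  assumes b: "\<And>i. i < m \<Longrightarrow> p ^ (ee + 1) dvd b i - u i" and s: "s \<in> S"
    and xs: "p ^ (ee + 1) dvd x - s" and m: "m \<le> k" and nz: "(\<Prod>i<m. x - b i) \<noteq> 0"
  shows "ww m \<le> (\<Sum>i<m. multiplicity p (x - b i))"
proof (cases "\<exists>j<m. s = u j")
  case True
  then obtain j where j: "j < m" "s = u j" by blast
  have "x - b j = (x - s) - (b j - u j)" using j by simp
  moreover have "p ^ (ee + 1) dvd (x - s) - (b j - u j)" by (rule dvd_diff[OF xs b[OF j(1)]])
  ultimately have "p ^ (ee + 1) dvd x - b j" by simp
  moreover have "x - b j \<noteq> 0" using nz j by auto
  moreover have "\<not> is_unit p" using pe by (simp add: prime_elem_def)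
  ultimately have "ee + 1 \<le> multiplicity p (x - b j)" by (intro multiplicity_geI)
  also have "\<dots> \<le> (\<Sum>i<m. multiplicity p (x - b i))" using j by (intro member_le_sum) auto
  finally show ?thesis using F1[OF m] by simp
next
  case False
  show ?thesis
  proof (cases "m = 0")
    case True thus ?thesis by (simp add: ww_def)
  next
    case m0: False
    have "ww m \<le> (\<Sum>i<m. multiplicity p (s - u i))"
      using False m0 m s by (intro S1) auto
    hence "ww m \<le> min (\<Sum>i<m. multiplicity p (s - u i)) (ee + 1)" using F1[OF m] by simp
    also have "\<dots> \<le> (\<Sum>i<m. min (multiplicity p (s - u i)) (ee + 1))" by (rule min_sum_le)
    also have "\<dots> \<le> (\<Sum>i<m. multiplicity p (x - b i))"
    proof (intro sum_mono mult_E1 pe)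
      fix i assume "i \<in> {..<m}"
      thus "x - b i \<noteq> 0" using nz by auto
      have eq: "(x - b i) - (s - u i) = (x - s) - (b i - u i)" by (simp add: algebra_simps)
      have "p ^ (ee + 1) dvd (x - s) - (b i - u i)"
        using \<open>i \<in> {..<m}\<close> by (intro dvd_diff[OF xs b]) simp
      thus "p ^ (ee + 1) dvd (x - b i) - (s - u i)" by (subst eq)
    qed
    finally show ?thesis .
  qed
qed

lemma b_diff:
  assumes b: "\<And>i. i \<le> j \<Longrightarrow> p ^ (ee + 1) dvd b i - u i" and ij: "i < j" "j \<le> k"
  shows "b j - b i \<noteq> 0 \<and> multiplicity p (b j - b i) = multiplicity p (u j - u i)"
proof (rule mult_E2[OF _ F2[OF ij] u_ne[OF ij] pe])
  have eq: "(b j - b i) - (u j - u i) = (b j - u j) - (b i - u i)" by (simp add: algebra_simps)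
  have "p ^ (ee + 1) dvd (b j - u j) - (b i - u i)"
    using ij by (intro dvd_diff b) auto
  thus "p ^ (ee + 1) dvd (b j - b i) - (u j - u i)" by (subst eq)
qed

lemma Qgood:
  assumes b: "\<And>i. i \<le> m \<Longrightarrow> p ^ (ee + 1) dvd b i - u i" and s: "s \<in> S"
    and xs: "p ^ (ee + 1) dvd x - s" and m: "m \<le> k"
  shows "poly (Qb (\<lambda>i. to_fract (b i)) m) (to_fract x) \<in> loc_at p"
proof -
  have eq: "poly (Qb (\<lambda>i. to_fract (b i)) m) (to_fract x) = Fract (\<Prod>i<m. x - b i) (\<Prod>i<m. b m - b i)"
    by (simp add: poly_Qb Fract_conv_to_fract to_fract_prod divide_inverse mult.commute)
  have bd: "b m - b i \<noteq> 0 \<and> multiplicity p (b m - b i) = multiplicity p (u m - u i)" if "i < m" for i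
    using b_diff[of m b i] b that m by auto
  have dnz: "(\<Prod>i<m. b m - b i) \<noteq> 0" using bd by auto
  have dmult: "multiplicity p (\<Prod>i<m. b m - b i) = ww m"
    using bd m by (subst prime_elem_multiplicity_prod_distrib[OF pe]) (auto simp: ww_sum)
  show ?thesis
  proof (cases "(\<Prod>i<m. x - b i) = 0")
    case True show ?thesis unfolding eq True fract_collapse(1) by (rule loc_0[OF pe])
  next
    case False
    have "ww m \<le> (\<Sum>i<m. multiplicity p (x - b i))" using W[OF _ s xs m False] b by auto
    also have "\<dots> = multiplicity p (\<Prod>i<m. x - b i)"
      using False by (subst prime_elem_multiplicity_prod_distrib[OF pe]) auto
    finally show ?thesis unfolding eq using dmult dnz False by (intro loc_Fract[OF pe]) auto
  qed
qed

lemma b_inj: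
  assumes b: "\<And>i. i \<le> n \<Longrightarrow> p ^ (ee + 1) dvd b i - u i" and n: "n \<le> k"
  shows "inj_on (\<lambda>i. to_fract (b i)) {..n}"
proof (rule inj_onI)
  fix i j assume ij: "i \<in> {..n}" "j \<in> {..n}" "to_fract (b i) = to_fract (b j)"
  show "i = j"
  proof (rule ccontr)
    assume "i \<noteq> j"
    then consider "i < j" | "j < i" by linarith
    thus False using b_diff[of j b i] b_diff[of i b j] b ij n by cases auto
  qed
qed

end


theorem lemma4p1:
  fixes S :: "'a::{factorial_semiring,idom} set" and d :: 'a and k k' :: nat
    and a :: "nat \<Rightarrow> 'a" and f :: "'a fract poly"
  assumes "S \<noteq> {}" and "d \<noteq> 0" and "k > 0"
    and "d_seq d S k a"
    and "degree f = k'" and "k' \<le> k"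
    and "\<exists>g :: 'a poly. \<exists>d' :: 'a. d' \<noteq> 0 \<and> d' dvd d \<and>
           f = smult (inverse (to_fract d')) (map_poly to_fract g)"
  shows "f \<in> IntSR S \<longleftrightarrow> (\<forall>i\<le>k'. poly f (to_fract (a i)) \<in> range to_fract)"
proof -
  obtain P :: "'a set" and u :: "'a \<Rightarrow> nat \<Rightarrow> 'a" where
    Pirr: "\<And>p. p \<in> P \<Longrightarrow> irreducible p" and
    Pcov: "\<And>q. irreducible q \<Longrightarrow> q dvd d \<Longrightarrow> \<exists>p\<in>P. p dvd q \<and> q dvd p" and
    Pseq: "\<And>p. p \<in> P \<Longrightarrow> pi_seq p S k (u p)" and
    Pcong: "\<And>p i. p \<in> P \<Longrightarrow> i \<le> k \<Longrightarrow>
       p ^ (multiplicity p (\<Prod>i<k. u p k - u p i) + 1) dvd (a i - u p i)"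
  proof -
    from assms(4)[unfolded d_seq_def] obtain P :: "'a set" and u :: "'a \<Rightarrow> nat \<Rightarrow> 'a" where
      h: "finite P" "(\<forall>p\<in>P. irreducible p \<and> p dvd d)"
        "(\<forall>p\<in>P. \<forall>q\<in>P. p \<noteq> q \<longrightarrow> \<not> (p dvd q \<and> q dvd p))"
        "(\<forall>q. irreducible q \<and> q dvd d \<longrightarrow> (\<exists>p\<in>P. p dvd q \<and> q dvd p))"
        "(\<forall>p\<in>P. pi_seq p S k (u p) \<and>
           (\<forall>i\<le>k. p ^ (multiplicity p (\<Prod>i<k. u p k - u p i) + 1) dvd (a i - u p i)))"
      by (elim exE conjE) 
    show ?thesis 
    proof (rule that[of P u])
      show "\<And>p. p \<in> P \<Longrightarrow> irreducible p" using h(2) by blast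
      show "\<And>q. irreducible q \<Longrightarrow> q dvd d \<Longrightarrow> \<exists>p\<in>P. p dvd q \<and> q dvd p" using h(4) by blast
      show "\<And>p. p \<in> P \<Longrightarrow> pi_seq p S k (u p)" using h(5) by blast
      show "\<And>p i. p \<in> P \<Longrightarrow> i \<le> k \<Longrightarrow>
       p ^ (multiplicity p (\<Prod>i<k. u p k - u p i) + 1) dvd (a i - u p i)" using h(5) by blast
    qed
  qed
  obtain g d' where d': "d' \<noteq> 0" "d' dvd d" and fg: "f = smult (inverse (to_fract d')) (map_poly to_fract g)"
    using assms(7) by blast
  have ndiv: "poly f (to_fract y) \<in> loc_at q" if "\<not> q dvd d" for q y
  proof -
    have "poly f (to_fract y) = Fract (poly g y) d'"
      by (simp add: fg poly_fract_poly Fract_conv_to_fract divide_inverse mult.commute)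
    moreover have "\<not> q dvd d'" using that d'(2) dvd_trans by blast
    ultimately show ?thesis unfolding loc_at_def using d'(1) by blast
  qed
  have assoc: "loc_at q = loc_at p" if "p dvd q" "q dvd p" for p q :: 'a
    unfolding loc_at_def using that dvd_trans by blast
  have Lrules: "0 \<in> loc_at p"
      "\<And>x y. x \<in> loc_at p \<Longrightarrow> y \<in> loc_at p \<Longrightarrow> x + y \<in> loc_at p"
      "\<And>x y. x \<in> loc_at p \<Longrightarrow> y \<in> loc_at p \<Longrightarrow> x - y \<in> loc_at p"
      "\<And>x y. x \<in> loc_at p \<Longrightarrow> y \<in> loc_at p \<Longrightarrow> x * y \<in> loc_at p"
    if "prime_elem p" for p :: 'a
    using that by (auto intro: loc_0 loc_add loc_diff loc_mult)
  have pcase: "z \<in> loc_at q"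
    if red: "\<And>p. p \<in> P \<Longrightarrow> prime_elem p \<Longrightarrow> pi_seq p S k (u p) \<Longrightarrow>
          (\<And>i. i \<le> k \<Longrightarrow> p ^ (ee p k (u p) + 1) dvd (a i - u p i)) \<Longrightarrow> z \<in> loc_at p"
      and nd: "\<not> q dvd d \<Longrightarrow> z \<in> loc_at q" and q: "irreducible q" for q :: 'a and z
  proof (cases "q dvd d")
    case False thus ?thesis using nd by blast
  next
    case True
    then obtain p where p: "p \<in> P" "p dvd q" "q dvd p" using Pcov q by blast
    have pe: "prime_elem p" using Pirr p(1) by (simp add: prime_elem_iff_irreducible)
    have "z \<in> loc_at p"
      using Pseq[OF p(1)] Pcong[OF p(1)] ee_def[OF pe Pseq[OF p(1)]] by (intro red[OF p(1) pe]) auto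
    thus ?thesis using assoc[OF p(2,3)] by simp
  qed
  have uS: "\<And>p j. p \<in> P \<Longrightarrow> j \<le> k \<Longrightarrow> u p j \<in> S" using Pseq unfolding pi_seq_def by blast
  show ?thesis
  proof
    assume fI: "f \<in> IntSR S"
    show "\<forall>i\<le>k'. poly f (to_fract (a i)) \<in> range to_fract"
    proof (intro allI impI loc_global)
      fix i and q :: 'a assume i: "i \<le> k'" and q: "irreducible q"
      show "poly f (to_fract (a i)) \<in> loc_at q"
      proof (rule pcase[OF _ ndiv q])
        fix p assume p: "p \<in> P" and pe: "prime_elem p" and ps: "pi_seq p S k (u p)"
          and cong: "\<And>i. i \<le> k \<Longrightarrow> p ^ (ee p k (u p) + 1) dvd (a i - u p i)"
        show "poly f (to_fract (a i)) \<in> loc_at p"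
        proof (rule newton_good[OF Lrules[OF pe]])
          show "inj_on (\<lambda>j. to_fract (u p j)) {..k'}"
            by (rule b_inj[OF pe ps]) (use assms(6) in auto)
          show "degree f \<le> k'" using assms(5) by simp
          fix j assume j: "j \<le> k'"
          have "poly f (to_fract (u p j)) \<in> range to_fract"
            using fI uS[OF p, of j] j assms(6) unfolding IntSR_def by auto
          thus "poly f (to_fract (u p j)) \<in> loc_at p" using loc_to_fract[OF pe] by auto
        next
          fix j m assume j: "j \<le> k'" "m < j"
          show "poly (Qb (\<lambda>j. to_fract (u p j)) m) (to_fract (u p j)) \<in> loc_at p"
            by (rule Qgood[OF pe ps _ uS[OF p, of j]]) (use j assms(6) in auto)
        next
          fix m assume m: "m \<le> k'"
          show "poly (Qb (\<lambda>j. to_fract (u p j)) m) (to_fract (a i)) \<in> loc_at p"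
            by (rule Qgood[OF pe ps _ uS[OF p, of i]]) (use m i assms(6) cong in auto)
        qed
      qed
    qed
  next
    assume H: "\<forall>i\<le>k'. poly f (to_fract (a i)) \<in> range to_fract"
    show "f \<in> IntSR S" unfolding IntSR_def
    proof (intro CollectI ballI loc_global)
      fix s and q :: 'a assume s: "s \<in> S" and q: "irreducible q"
      show "poly f (to_fract s) \<in> loc_at q"
      proof (rule pcase[OF _ ndiv q])
        fix p assume p: "p \<in> P" and pe: "prime_elem p" and ps: "pi_seq p S k (u p)"
          and cong: "\<And>i. i \<le> k \<Longrightarrow> p ^ (ee p k (u p) + 1) dvd (a i - u p i)"
        show "poly f (to_fract s) \<in> loc_at p"
        proof (rule newton_good[OF Lrules[OF pe]])
          show "inj_on (\<lambda>j. to_fract (a j)) {..k'}"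
            by (rule b_inj[OF pe ps]) (use assms(6) cong in auto)
          show "degree f \<le> k'" using assms(5) by simp
          fix j assume j: "j \<le> k'"
          thus "poly f (to_fract (a j)) \<in> loc_at p" using H loc_to_fract[OF pe] by auto
        next
          fix j m assume j: "j \<le> k'" "m < j"
          show "poly (Qb (\<lambda>j. to_fract (a j)) m) (to_fract (a j)) \<in> loc_at p"
            by (rule Qgood[OF pe ps _ uS[OF p, of j]]) (use j assms(6) cong in auto)
        next
          fix m assume m: "m \<le> k'"
          show "poly (Qb (\<lambda>j. to_fract (a j)) m) (to_fract s) \<in> loc_at p"
            by (rule Qgood[OF pe ps _ s]) (use m assms(6) cong in auto)
        qed
      qed
    qed
  qed
qed

end
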